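(* Let $m\ge3$ be odd, $n\ge 0$ an integer, $h=8(m-2)n+3(m-4)^2$, and $\bm d=(d_1,d_2,d_3)\in\mathbb{N}^3$. Let $p$ be an odd prime with $p\mid(m-2)$. Then \[ b_p(h,\lambda_{\bm d},0)=\begin{cases} p^{\mathrm{ord}_p(m-2)+\min_j\{\mathrm{ord}_p(d_j)\}} & \text{if } n\in\gcd(d_1,d_2,d_3)\mathbb{Z}_p,\\ 0&\text{otherwise.}\end{cases} \]
   Context: $V$ is the ternary quadratic space over $\mathbb{Q}$ with basis $e_1,e_2,e_3$, $B(e_i,e_j)=4(m-2)^2\delta_{ij}$, $Q(x)=B(x,x)$; $L^{\bm d}=\mathbb{Z}d_1e_1+\mathbb{Z}d_2e_2+\mathbb{Z}d_3e_3$, $\nu=\frac{4-m}{2(m-2)}(e_1+e_2+e_3)$, $X^{\bm d}=L^{\bm d}+\nu$, and $\lambda_{\bm d}$ is the characteristic function of $X^{\bm d}$. For $z\in\mathbb{Q}_p$, $\bm e_p(z)=e^{-2\pi i y}$ where $y\in\bigcup_{t\ge1}p^{-t}\mathbb{Z}$ satisfies $z-y\in\mathbb{Z}_p$. With Haar measures $dv$ on $L^{\bm d}_p=L^{\bm d}\otimes\mathbb{Z}_p$ and $d\sigma$ on $\mathbb{Q}_p$ normalized so that $L^{\bm d}_p$ and $\mathbb{Z}_p$ have volume $1$, the local density is \[ b_p(h,\lambda_{\bm d},0)=\int_{\mathbb{Q}_p}\int_{L^{\bm d}_p}\bm e_p\big(\sigma(Q(v+\nu)-h)\big)\,dv\,d\sigma.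 \] *)

theory Defs
  imports Complex_Main "HOL-Computational_Algebra.Primes"
begin

text \<open>p-adic notions restricted to the rationals (the integrand only ever
  takes rational values at the coset representatives used below).\<close>

definition in_Zp :: "nat \<Rightarrow> rat \<Rightarrow> bool" where
  "in_Zp p q \<longleftrightarrow> coprime (snd (quotient_of q)) (int p)"

definition in_Z_inv_p :: "nat \<Rightarrow> rat \<Rightarrow> bool" where
  "in_Z_inv_p p q \<longleftrightarrow> (\<exists>(a::int) (t::nat). q = of_int a / of_nat p ^ t)"

definition e_p :: "nat \<Rightarrow> rat \<Rightarrow> complex" where
  "e_p p z = cis (- 2 * pi * real_of_rat (SOME y. in_Z_inv_p p y \<and> in_Zp p (z - y)))"

definition Qform :: "int \<Rightarrow> rat \<times> rat \<times> rat \<Rightarrow> rat" where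
  "Qform m x = (case x of (x1, x2, x3) \<Rightarrow>
      4 * (of_int m - 2)^2 * (x1^2 + x2^2 + x3^2))"

text \<open>The common coordinate of nu = (4-m)/(2(m-2)) (e_1+e_2+e_3).\<close>
definition nu_coord :: "int \<Rightarrow> rat" where
  "nu_coord m = (4 - of_int m) / (2 * (of_int m - 2))"

text \<open>The local density integral truncated to sigma in p^(-t) Z_p, computed
  exactly: for sigma in p^(-t) Z_p the integrand
  e_p(sigma (Q(v+nu) - h)) is constant on the cosets (a/p^t + Z_p) x (w + p^t L_p),
  because Q(v+nu) = sum_j (2(m-2) d_j x_j + 4 - m)^2 is integral in the coordinates x_j
  of v = sum_j d_j x_j e_j.  Each sigma-coset has measure 1, each v-coset p^(-3t).\<close>
definition local_density_trunc ::
  "nat \<Rightarrow> int \<Rightarrow> int \<Rightarrow> int \<Rightarrow> int \<Rightarrow> int \<Rightarrow> nat \<Rightarrow> complex" where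
  "local_density_trunc p m d1 d2 d3 h t =
     (\<Sum>a\<in>{0..<p^t}. \<Sum>x1\<in>{0..<p^t}. \<Sum>x2\<in>{0..<p^t}. \<Sum>x3\<in>{0..<p^t}.
        e_p p ((of_nat a / of_nat p ^ t) *
          (Qform m (of_int d1 * of_nat x1 + nu_coord m,
                    of_int d2 * of_nat x2 + nu_coord m,
                    of_int d3 * of_nat x3 + nu_coord m) - of_int h)))
     / of_nat p ^ (3 * t)"

text \<open>b_p(h, lambda_d, 0) = c means the (improper) integral over Q_p, i.e. the limit
  of the truncations over p^(-t) Z_p, exists and equals c.\<close>
definition has_local_density ::
  "nat \<Rightarrow> int \<Rightarrow> int \<Rightarrow> int \<Rightarrow> int \<Rightarrow> int \<Rightarrow> complex \<Rightarrow> bool" where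
  "has_local_density p m d1 d2 d3 h c \<longleftrightarrow>
     (local_density_trunc p m d1 d2 d3 h \<longlonglongrightarrow> c)"

end

theory Submission
  imports Defs "HOL-Library.Real_Mod"
begin


definition W :: "nat \<Rightarrow> int \<Rightarrow> complex" where
  "W q X = cis (2 * pi * of_int X / of_nat q)"

lemma W_add: "W q (X + Y) = W q X * W q Y"
  unfolding W_def cis_mult by (simp add: add_divide_distrib distrib_left)

lemma W_dvd: assumes "q > 0" "int q dvd X" shows "W q X = 1"
proof -
  obtain k where "X = int q * k" using assms by (auto elim: dvdE)
  then have "2 * pi * of_int X / of_nat q = 2 * pi * of_int k" using assms by simp
  then show ?thesis unfolding W_def by simp
qed

lemma W_mod: assumes "q > 0" shows "W q (X mod int q) = W q X"
proof -
  have "X = X mod int q + int q * (X div int q)" by simp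
  then have "W q X = W q (X mod int q) * W q (int q * (X div int q))"
    by (metis W_add)
  then show ?thesis using W_dvd[OF assms] by simp
qed

lemma W_cong: assumes "q > 0" "X mod int q = Y mod int q" shows "W q X = W q Y"
  by (metis W_mod assms)

lemma W_ne1: assumes "q > 0" "\<not> int q dvd X" shows "W q X \<noteq> 1"
proof
  assume "W q X = 1"
  then obtain n where n: "2 * pi * of_int X / of_nat q = of_int n * (2 * pi)"
    unfolding W_def cis_eq_1_iff by auto
  then have "real_of_int X = of_int n * of_nat q" using assms pi_gt_zero
    by (simp add: field_simps)
  then have "X = n * int q" by (metis of_int_eq_iff of_int_mult of_int_of_nat_eq)
  then show False using assms by simp
qed

lemma W_pow: "W q (int a * X) = W q X ^ a"
proof (induction a)
  case 0 then show ?case by (simp add: W_def)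
next
  case (Suc a)
  have "int (Suc a) * X = X + int a * X" by (simp add: algebra_simps)
  then show ?case using Suc W_add[of q X "int a * X"] by simp
qed

lemma charsum: assumes "q > 0"
  shows "(\<Sum>a\<in>{0..<q}. W q (int a * X)) = (if int q dvd X then of_nat q else 0)"
proof (cases "int q dvd X")
  case True
  then have "\<And>a. int q dvd int a * X" by simp
  then show ?thesis using True W_dvd[OF assms] by simp
next
  case False
  have ne: "W q X \<noteq> 1" using W_ne1[OF assms False] .
  have "(\<Sum>a\<in>{0..<q}. W q (int a * X)) = (\<Sum>a<q. W q X ^ a)"
    by (simp add: W_pow atLeast0LessThan)
  also have "\<dots> = (W q X ^ q - 1) / (W q X - 1)" using geometric_sum[OF ne] .
  also have "W q X ^ q = 1" using W_pow[of q q X, symmetric] W_dvd[OF assms] by simp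
  finally show ?thesis using False by simp
qed



lemma rat_int_of_pow_den:
  fixes r :: rat and c :: int
  assumes "prime p" "in_Zp p r" "r * of_nat p ^ u = of_int c"
  shows "\<exists>k::int. r = of_int k"
proof -
  obtain nu de where q: "quotient_of r = (nu, de)" by (cases "quotient_of r")
  have de0: "de > 0" using quotient_of_denom_pos[OF q] .
  have cop: "coprime nu de" using quotient_of_coprime[OF q] .
  have rr: "r = of_int nu / of_int de" using quotient_of_div[OF q] .
  have cp: "coprime de (int p)" using assms(2) q unfolding in_Zp_def by simp
  have "of_int nu * of_nat p ^ u = (of_int c * of_int de :: rat)"
    using assms(3) de0 unfolding rr by (simp add: field_simps)
  then have "nu * int p ^ u = c * de"
    by (metis (mono_tags) of_int_eq_iff of_int_mult of_int_of_nat_eq of_int_power)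
  then have "de dvd nu * int p ^ u" by simp
  then have "de dvd int p ^ u" using cop
    by (metis coprime_commute coprime_dvd_mult_right_iff)
  moreover have "coprime de (int p ^ u)" using cp by simp
  ultimately have "is_unit de" by (meson coprime_common_divisor dvd_refl)
  then have "de = 1" using de0 by simp
  then show ?thesis using rr by auto
qed

lemma e_p_eval:
  assumes "prime p"
  shows "e_p p (of_int X / of_nat p ^ t) = W (p ^ t) (- X)"
proof -
  define z :: rat where "z = of_int X / of_nat p ^ t"
  have p0: "p > 0" using assms prime_gt_0_nat by blast
  have ex: "in_Z_inv_p p z \<and> in_Zp p (z - z)"
    unfolding in_Z_inv_p_def in_Zp_def z_def by auto
  define y where "y = (SOME y. in_Z_inv_p p y \<and> in_Zp p (z - y))"
  have y: "in_Z_inv_p p y \<and> in_Zp p (z - y)"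
    unfolding y_def by (rule someI[of _ z], rule ex)
  then obtain b s where bs: "y = of_int b / of_nat p ^ s" unfolding in_Z_inv_p_def by auto
  have "(z - y) * of_nat p ^ (t + s) = of_int (X * int p ^ s - b * int p ^ t)"
    unfolding z_def bs using p0 by (simp add: field_simps power_add)
  then obtain k where k: "z - y = of_int k"
    using rat_int_of_pow_den[OF assms] y by blast
  have "y = z - of_int k" using k by simp
  then have yz: "real_of_rat y = real_of_rat z - of_int k"
    by (simp add: of_rat_diff)
  have "- 2 * pi * real_of_rat y = - 2 * pi * real_of_rat z + 2 * pi * of_int k"
    unfolding yz by (simp add: algebra_simps)
  then have "cis (- 2 * pi * real_of_rat y) = cis (- 2 * pi * real_of_rat z) * cis (2 * pi * of_int k)"
    by (simp only: cis_mult)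
  also have "cis (2 * pi * of_int k) = 1" by simp
  finally have "cis (- 2 * pi * real_of_rat y) = cis (- 2 * pi * real_of_rat z)" by simp
  moreover have "real_of_rat z = of_int X / of_nat p ^ t"
    unfolding z_def by (simp add: of_rat_divide of_rat_power)
  ultimately show ?thesis unfolding e_p_def W_def y_def[symmetric] z_def[symmetric]
    by simp
qed



lemma unit_factor_coprime:
  fixes M d a b :: int
  assumes "prime p" "odd p" "int p dvd M"
  shows "coprime (int p ^ t) (M * d * (a + b) + 2 - M)"
proof -
  have "\<not> int p dvd (M * d * (a + b) + 2 - M)"
  proof
    assume h: "int p dvd (M * d * (a + b) + 2 - M)"
    have "int p dvd M * d * (a + b) - M" using assms(3) by simp
    then have "int p dvd 2" using h
      by (metis add_diff_cancel_left' add_diff_eq diff_add_cancel dvd_diff)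
    then have "p dvd 2" by presburger
    then have "p \<le> 2" by (simp add: dvd_imp_le)
    moreover have "p \<ge> 2" using assms(1) prime_ge_2_nat by blast
    ultimately show False using assms(2) by simp
  qed
  then have "coprime (int p) (M * d * (a + b) + 2 - M)"
    using assms(1) by (simp add: prime_imp_coprime)
  then show ?thesis by simp
qed

lemma bijsum:
  fixes M d c :: int
  assumes "prime p" "odd p" "int p dvd M"
  shows "(\<Sum>x\<in>{0..<p^t}. W (p^t) (c * (int x * (M*d*int x + 2 - M))))
        = (\<Sum>y\<in>{0..<p^t}. W (p^t) (c * int y))"
proof -
  define q where "q = p ^ t"
  have q0: "q > 0" unfolding q_def using assms(1) prime_gt_0_nat by simp
  define g where "g x = int x * (M*d*int x + 2 - M)" for x :: nat
  define phi where "phi x = nat (g x mod int q)" for x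
  have phi_int: "int (phi x) = g x mod int q" for x unfolding phi_def using q0 by simp
  have sub: "phi ` {0..<q} \<subseteq> {0..<q}"
  proof
    fix y assume "y \<in> phi ` {0..<q}"
    then obtain x where "y = phi x" by auto
    then have "int y < int q" using phi_int q0 by simp
    then show "y \<in> {0..<q}" by simp
  qed
  have inj: "inj_on phi {0..<q}"
  proof
    fix x x' assume xs: "x \<in> {0..<q}" "x' \<in> {0..<q}" and e: "phi x = phi x'"
    then have "g x mod int q = g x' mod int q" using phi_int by metis
    then have "int q dvd g x - g x'" by (simp add: mod_eq_dvd_iff)
    moreover have "g x - g x' = (int x - int x') * (M * d * (int x + int x') + 2 - M)"
      unfolding g_def by (simp add: algebra_simps)
    moreover have "coprime (int q) (M * d * (int x + int x') + 2 - M)"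
      unfolding q_def using unit_factor_coprime[OF assms] by simp
    ultimately have "int q dvd int x - int x'"
      by (metis coprime_dvd_mult_left_iff)
    moreover have "\<bar>int x - int x'\<bar> < int q" using xs by auto
    ultimately have "int x - int x' = 0"
      using dvd_imp_le_int[of "int x - int x'" "int q"] by fastforce
    then show "x = x'" by simp
  qed
  have bij: "bij_betw phi {0..<q} {0..<q}"
    unfolding bij_betw_def using inj endo_inj_surj[OF _ sub inj] by simp
  have "(\<Sum>x\<in>{0..<q}. W q (c * g x)) = (\<Sum>x\<in>{0..<q}. W q (c * int (phi x)))"
  proof (rule sum.cong)
    fix x show "W q (c * g x) = W q (c * int (phi x))"
      using W_cong[OF q0] phi_int by (metis mod_mult_right_eq)
  qed simp
  also have "\<dots> = (\<Sum>y\<in>{0..<q}. W q (c * int y))"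
    using sum.reindex_bij_betw[OF bij, of "\<lambda>y. W q (c * int y)"] .
  finally show ?thesis unfolding q_def g_def .
qed

lemma onedim:
  fixes M d c :: int
  assumes "prime p" "odd p" "int p dvd M"
  shows "(\<Sum>x\<in>{0..<p^t}. W (p^t) (c * (int x * (M*d*int x + 2 - M))))
        = (if int p ^ t dvd c then of_nat (p ^ t) else 0)"
proof -
  have q0: "p ^ t > 0" using assms(1) prime_gt_0_nat by simp
  show ?thesis unfolding bijsum[OF assms]
    using charsum[OF q0, of c] by (simp add: mult.commute)
qed



lemma cancel_pow:
  fixes A u :: int
  assumes "prime p" "\<not> int p dvd u"
  shows "(int p ^ t dvd A * int p ^ s * u) \<longleftrightarrow> (int p ^ (t - s) dvd A)"
proof -
  have pr: "prime (int p)" using assms(1) by simp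
  have "coprime (int p) u" using pr assms(2) by (simp add: prime_imp_coprime)
  then have "coprime (int p ^ t) u" by simp
  then have "(int p ^ t dvd A * int p ^ s * u) \<longleftrightarrow> (int p ^ t dvd A * int p ^ s)"
    by (simp add: coprime_dvd_mult_left_iff)
  also have "\<dots> \<longleftrightarrow> (int p ^ (t - s) dvd A)"
  proof (cases "t \<le> s")
    case True
    then have "int p ^ t dvd int p ^ s" by (simp add: le_imp_power_dvd)
    then show ?thesis using True by simp
  next
    case False
    then have "int p ^ t = int p ^ (t - s) * int p ^ s"
      by (simp add: power_add[symmetric])
    moreover have "int p ^ s \<noteq> 0" using pr by (simp add: prime_gt_0_nat)
    ultimately show ?thesis using dvd_times_right_cancel_iff[of "int p ^ s" "int p^(t-s)" A] by simp
  qed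
  finally show ?thesis .
qed

lemma final_sum:
  fixes M M' d1 d2 d3 e1 e2 e3 n :: int
  assumes pr: "prime p" and od: "odd p"
    and M: "M = int p ^ mu * M'" "\<not> int p dvd M'"
    and d1: "d1 = int p ^ k1 * e1" "\<not> int p dvd e1"
    and d2: "d2 = int p ^ k2 * e2" "\<not> int p dvd e2"
    and d3: "d3 = int p ^ k3 * e3" "\<not> int p dvd e3"
    and k: "k = min k1 (min k2 k3)"
    and t: "t \<ge> mu + k"
  shows "(\<Sum>a\<in>{0..<p^t}. if (int p ^ t dvd 4 * int a * M * d1 \<and> int p ^ t dvd 4 * int a * M * d2
           \<and> int p ^ t dvd 4 * int a * M * d3) then W (p^t) (int a * (8 * M * n)) else 0)
        = (if int p ^ k dvd n then of_nat p ^ (mu + k) else 0)"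
proof -
  have prI: "prime (int p)" using pr by simp
  have p0: "p > 0" using pr prime_gt_0_nat by blast
  have np2: "\<not> int p dvd 2"
  proof
    assume "int p dvd 2" then have "p dvd 2" by presburger
    then have "p \<le> 2" by (simp add: dvd_imp_le)
    moreover have "p \<ge> 2" using pr prime_ge_2_nat by blast
    ultimately show False using od by simp
  qed
  have np4: "\<not> int p dvd 4" using np2 prI
    by (metis mult_2 numeral_Bit0 prime_dvd_mult_iff mult.commute dvd_add_triv_left_iff add.commute
        dvd_add dvd_mult2 mult_2_right one_add_one)
  have np8: "\<not> int p dvd 8" using np2 prI
    by (metis (no_types) prime_dvd_mult_iff numeral_times_numeral mult_2 numeral_Bit0 num_double)
  define r where "r = t - (mu + k)"
  define e where "e = mu + k"
  have te: "t = r + e" unfolding r_def e_def using t by simp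
  have cj: "int p ^ t dvd 4 * int a * M * (int p ^ kj * ej) \<longleftrightarrow> p ^ (t - (mu + kj)) dvd a"
    if "\<not> int p dvd ej" for a kj ej
  proof -
    have eq: "4 * int a * M * (int p ^ kj * ej) = int a * int p ^ (mu + kj) * (4 * M' * ej)"
      using M by (simp add: power_add algebra_simps)
    have "\<not> int p dvd 4 * M' * ej" using np4 M(2) that prI
      by (simp add: prime_dvd_mult_iff)
    then have "int p ^ t dvd 4 * int a * M * (int p ^ kj * ej) \<longleftrightarrow> int p ^ (t - (mu + kj)) dvd int a"
      unfolding eq by (rule cancel_pow[OF pr])
    then show ?thesis by (metis of_nat_dvd_iff of_nat_power)
  qed
  have cond: "(int p ^ t dvd 4 * int a * M * d1 \<and> int p ^ t dvd 4 * int a * M * d2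
           \<and> int p ^ t dvd 4 * int a * M * d3) \<longleftrightarrow> p ^ r dvd a" for a
  proof -
    have "(p ^ (t - (mu + k1)) dvd a \<and> p ^ (t - (mu + k2)) dvd a \<and> p ^ (t - (mu + k3)) dvd a)
          \<longleftrightarrow> p ^ r dvd a"
    proof
      assume "p ^ r dvd a"
      moreover have "p ^ (t - (mu + kj)) dvd p ^ r" if "k \<le> kj" for kj
        unfolding r_def using that by (intro le_imp_power_dvd) simp
      ultimately show "p ^ (t - (mu + k1)) dvd a \<and> p ^ (t - (mu + k2)) dvd a \<and> p ^ (t - (mu + k3)) dvd a"
        unfolding k by (meson dvd_trans min.cobounded1 min.cobounded2 order_trans)
    next
      assume "p ^ (t - (mu + k1)) dvd a \<and> p ^ (t - (mu + k2)) dvd a \<and> p ^ (t - (mu + k3)) dvd a"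
      moreover have "k = k1 \<or> k = k2 \<or> k = k3" unfolding k by linarith
      ultimately show "p ^ r dvd a" unfolding r_def by auto
    qed
    then show ?thesis using cj d1 d2 d3 by simp
  qed
  let ?X = "8 * M * n"
  have "(\<Sum>a\<in>{0..<p^t}. if (int p ^ t dvd 4 * int a * M * d1 \<and> int p ^ t dvd 4 * int a * M * d2
           \<and> int p ^ t dvd 4 * int a * M * d3) then W (p^t) (int a * ?X) else 0)
      = (\<Sum>a\<in>{0..<p^t}. if p ^ r dvd a then W (p^t) (int a * ?X) else 0)"
    using cond by simp
  also have "\<dots> = (\<Sum>a\<in>{a\<in>{0..<p^t}. p ^ r dvd a}. W (p^t) (int a * ?X))"
    by (rule sum.inter_filter[symmetric]) simp
  also have "{a\<in>{0..<p^t}. p ^ r dvd a} = (\<lambda>b. b * p ^ r) ` {0..<p^e}"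
  proof
    show "{a\<in>{0..<p^t}. p ^ r dvd a} \<subseteq> (\<lambda>b. b * p ^ r) ` {0..<p^e}"
    proof
      fix a assume "a \<in> {a\<in>{0..<p^t}. p ^ r dvd a}"
      then have a1: "p ^ r dvd a" "a < p ^ t" by auto
      then obtain b where "a = p ^ r * b" by (auto elim: dvdE)
      then have b: "a = b * p ^ r" "a < p ^ t" using a1 by (simp_all add: mult.commute)
      then have "b * p ^ r < p ^ e * p ^ r" unfolding te by (simp add: power_add mult.commute)
      then have "b < p ^ e" using p0 by simp
      then show "a \<in> (\<lambda>b. b * p ^ r) ` {0..<p^e}" using b by auto
    qed
  next
    show "(\<lambda>b. b * p ^ r) ` {0..<p^e} \<subseteq> {a\<in>{0..<p^t}. p ^ r dvd a}"
    proof
      fix a assume "a \<in> (\<lambda>b. b * p ^ r) ` {0..<p^e}"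
      then obtain b where b: "a = b * p ^ r" "b \<in> {0..<p ^ e}" by (rule imageE)
      then have b: "a = b * p ^ r" "b < p ^ e" by simp_all
      then have "b * p ^ r < p ^ e * p ^ r" using p0 by simp
      then have "a < p ^ t" using b unfolding te by (simp add: power_add mult.commute)
      then show "a \<in> {a\<in>{0..<p^t}. p ^ r dvd a}" using b by simp
    qed
  qed
  also have "(\<Sum>a\<in>(\<lambda>b. b * p ^ r) ` {0..<p^e}. W (p^t) (int a * ?X))
      = (\<Sum>b\<in>{0..<p^e}. W (p^t) (int (b * p ^ r) * ?X))"
    by (subst sum.reindex) (use p0 in \<open>auto simp: inj_on_def\<close>)
  also have "\<dots> = (\<Sum>b\<in>{0..<p^e}. W (p^e) (int b * ?X))"
  proof (rule sum.cong)
    fix b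
    have "2 * pi * of_int (int (b * p ^ r) * ?X) / of_nat (p ^ t)
        = 2 * pi * of_int (int b * ?X) / of_nat (p ^ e)"
      unfolding te using p0 by (simp add: power_add field_simps)
    then show "W (p^t) (int (b * p ^ r) * ?X) = W (p^e) (int b * ?X)"
      unfolding W_def by simp
  qed simp
  also have "\<dots> = (if int (p ^ e) dvd ?X then of_nat (p ^ e) else 0)"
    using charsum p0 by simp
  also have "(int (p ^ e) dvd ?X) \<longleftrightarrow> int p ^ k dvd n"
  proof -
    have X: "?X = int p ^ mu * (8 * M' * n)" using M by (simp add: algebra_simps)
    have nz: "int p ^ mu \<noteq> 0" using p0 by simp
    have pe: "int (p ^ e) = int p ^ mu * int p ^ k" unfolding e_def by (simp add: power_add)
    have "(int (p ^ e) dvd ?X) \<longleftrightarrow> int p ^ mu * int p ^ k dvd int p ^ mu * (8 * M' * n)"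
      by (simp only: X pe)
    also have "\<dots> \<longleftrightarrow> int p ^ k dvd 8 * M' * n" using nz p0 by simp
    finally have "(int (p ^ e) dvd ?X) \<longleftrightarrow> int p ^ k dvd 8 * M' * n" .
    also have "\<dots> \<longleftrightarrow> int p ^ k dvd n"
    proof -
      have "\<not> int p dvd 8 * M'" using np8 M(2) prI by (simp add: prime_dvd_mult_iff)
      then have "coprime (int p) (8 * M')" using prI prime_imp_coprime by blast
      then have "coprime (int p ^ k) (8 * M')" by simp
      then show ?thesis by (simp add: coprime_dvd_mult_right_iff mult.assoc)
    qed
    finally show ?thesis .
  qed
  finally show ?thesis unfolding e_def by simp
qed



lemma coord_sq:
  fixes c y :: rat
  assumes "c \<noteq> 0"
  shows "4 * c^2 * (y + (2 - c) / (2 * c))^2 = (2 * c * y + 2 - c)^2"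
proof -
  have "y + (2 - c) / (2 * c) = (2 * c * y + 2 - c) / (2 * c)"
    using assms by (simp add: field_simps)
  then show ?thesis using assms by (simp add: power_divide power_mult_distrib)
qed

lemma Qeq:
  fixes m n d1 d2 d3 :: int and x1 x2 x3 :: nat
  assumes "m \<noteq> 2"
  defines "M \<equiv> m - 2"
  shows "Qform m (of_int d1 * of_nat x1 + nu_coord m, of_int d2 * of_nat x2 + nu_coord m,
                  of_int d3 * of_nat x3 + nu_coord m) - of_int (8 * (m - 2) * n + 3 * (m - 4)^2)
       = of_int (4 * M * (d1 * (int x1 * (M*d1*int x1 + 2 - M)) + d2 * (int x2 * (M*d2*int x2 + 2 - M))
                 + d3 * (int x3 * (M*d3*int x3 + 2 - M))) - 8 * M * n)"
proof -
  define c :: rat where "c = of_int m - 2"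
  have c0: "c \<noteq> 0" using assms(1) unfolding c_def by simp
  have nu: "nu_coord m = (2 - c) / (2 * c)" unfolding nu_coord_def c_def by simp
  have cM: "c = of_int M" unfolding c_def M_def by simp
  have "Qform m (of_int d1 * of_nat x1 + nu_coord m, of_int d2 * of_nat x2 + nu_coord m,
                  of_int d3 * of_nat x3 + nu_coord m)
      = (2 * c * (of_int d1 * of_nat x1) + 2 - c)^2 + (2 * c * (of_int d2 * of_nat x2) + 2 - c)^2
        + (2 * c * (of_int d3 * of_nat x3) + 2 - c)^2"
    unfolding Qform_def nu c_def[symmetric] by (simp add: distrib_left coord_sq[OF c0])
  also have "\<dots> = of_int ((2 * M * (d1 * int x1) + 2 - M)^2 + (2 * M * (d2 * int x2) + 2 - M)^2
        + (2 * M * (d3 * int x3) + 2 - M)^2)"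
    unfolding cM by simp
  finally show ?thesis
    unfolding M_def by (simp add: power2_eq_square algebra_simps)
qed

lemma triple_sum:
  fixes C :: complex
  shows "(\<Sum>x1\<in>A. \<Sum>x2\<in>A. \<Sum>x3\<in>A. C * f1 x1 * f2 x2 * f3 x3)
       = C * sum f1 A * sum f2 A * sum f3 A"
proof -
  have a: "(\<Sum>x3\<in>A. C * f1 x1 * f2 x2 * f3 x3) = (C * f1 x1 * f2 x2) * sum f3 A" for x1 x2
    by (simp only: sum_distrib_left)
  have b: "(\<Sum>x2\<in>A. (C * f1 x1 * f2 x2) * sum f3 A) = (C * f1 x1) * sum f2 A * sum f3 A" for x1
    by (simp only: sum_distrib_left[symmetric] sum_distrib_right[symmetric])
  have c: "(\<Sum>x1\<in>A. (C * f1 x1) * sum f2 A * sum f3 A) = C * sum f1 A * sum f2 A * sum f3 A"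
    by (simp only: sum_distrib_left[symmetric] sum_distrib_right[symmetric])
  show ?thesis by (simp only: a b c)
qed



lemma trunc_eval:
  fixes m n d1 d2 d3 :: int and p :: nat
  assumes pr: "prime p" and od: "odd p" and mM: "M = m - 2" and dvdM: "int p dvd M" and m2: "m \<noteq> 2"
  shows "local_density_trunc p m d1 d2 d3 (8 * (m - 2) * n + 3 * (m - 4)^2) t
       = (\<Sum>a\<in>{0..<p^t}. if (int p ^ t dvd 4 * int a * M * d1 \<and> int p ^ t dvd 4 * int a * M * d2
           \<and> int p ^ t dvd 4 * int a * M * d3) then W (p^t) (int a * (8 * M * n)) else 0)"
proof -
  define q where "q = p ^ t"
  have p0: "p > 0" using pr prime_gt_0_nat by blast
  define g where "g d x = int x * (M*d*int x + 2 - M)" for d :: int and x :: nat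
  define c where "c d a = - (4 * int a * M * d)" for d :: int and a :: nat
  define S where "S d a = (\<Sum>x\<in>{0..<q}. W q (c d a * g d x))" for d a
  have S_eval: "S d a = (if int p ^ t dvd 4 * int a * M * d then of_nat q else 0)" for d a
    unfolding S_def g_def c_def q_def using onedim[OF pr od dvdM, where t=t and d=d and c="- (4 * int a * M * d)"]
    by simp
  have summand: "e_p p ((of_nat a / of_nat p ^ t) *
          (Qform m (of_int d1 * of_nat x1 + nu_coord m,
                    of_int d2 * of_nat x2 + nu_coord m,
                    of_int d3 * of_nat x3 + nu_coord m) - of_int (8 * (m - 2) * n + 3 * (m - 4)^2)))
      = W q (int a * (8 * M * n)) * W q (c d1 a * g d1 x1) * W q (c d2 a * g d2 x2) * W q (c d3 a * g d3 x3)"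
    for a x1 x2 x3
  proof -
    define N where "N = 4 * M * (d1 * g d1 x1 + d2 * g d2 x2 + d3 * g d3 x3) - 8 * M * n"
    have "Qform m (of_int d1 * of_nat x1 + nu_coord m,
                    of_int d2 * of_nat x2 + nu_coord m,
                    of_int d3 * of_nat x3 + nu_coord m) - of_int (8 * (m - 2) * n + 3 * (m - 4)^2)
        = of_int N"
      unfolding N_def g_def mM using Qeq[OF m2] by simp
    then have "(of_nat a / of_nat p ^ t) *
          (Qform m (of_int d1 * of_nat x1 + nu_coord m,
                    of_int d2 * of_nat x2 + nu_coord m,
                    of_int d3 * of_nat x3 + nu_coord m) - of_int (8 * (m - 2) * n + 3 * (m - 4)^2))
        = of_int (int a * N) / of_nat p ^ t" by simp
    note eq1 = this
    have "e_p p ((of_nat a / of_nat p ^ t) *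
          (Qform m (of_int d1 * of_nat x1 + nu_coord m,
                    of_int d2 * of_nat x2 + nu_coord m,
                    of_int d3 * of_nat x3 + nu_coord m) - of_int (8 * (m - 2) * n + 3 * (m - 4)^2)))
        = W q (- (int a * N))" unfolding eq1 q_def by (rule e_p_eval[OF pr])
    also have "- (int a * N) = int a * (8 * M * n) + c d1 a * g d1 x1 + c d2 a * g d2 x2 + c d3 a * g d3 x3"
      unfolding N_def c_def by (simp add: algebra_simps)
    finally show ?thesis by (simp add: W_add)
  qed
  have "local_density_trunc p m d1 d2 d3 (8 * (m - 2) * n + 3 * (m - 4)^2) t
      = (\<Sum>a\<in>{0..<q}. W q (int a * (8 * M * n)) * S d1 a * S d2 a * S d3 a) / of_nat p ^ (3 * t)"
    unfolding local_density_trunc_def summand S_def q_def[symmetric] triple_sum ..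
  also have "\<dots> = (\<Sum>a\<in>{0..<q}. W q (int a * (8 * M * n)) * S d1 a * S d2 a * S d3 a / of_nat p ^ (3 * t))"
    by (simp add: sum_divide_distrib)
  also have "\<dots> = (\<Sum>a\<in>{0..<p^t}. if (int p ^ t dvd 4 * int a * M * d1 \<and> int p ^ t dvd 4 * int a * M * d2
           \<and> int p ^ t dvd 4 * int a * M * d3) then W (p^t) (int a * (8 * M * n)) else 0)"
  proof (rule sum.cong)
    fix a
    have p3: "(of_nat p ^ (3 * t) :: complex) = of_nat p ^ t * of_nat p ^ t * of_nat p ^ t"
    proof -
      have "3 * t = t + t + t" by simp
      then show ?thesis by (simp only: power_add)
    qed
    have pnz: "(of_nat p ^ t :: complex) \<noteq> 0" using p0 by simp
    show "W q (int a * (8 * M * n)) * S d1 a * S d2 a * S d3 a / of_nat p ^ (3 * t) =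
      (if (int p ^ t dvd 4 * int a * M * d1 \<and> int p ^ t dvd 4 * int a * M * d2
           \<and> int p ^ t dvd 4 * int a * M * d3) then W (p^t) (int a * (8 * M * n)) else 0)"
    proof (cases "int p ^ t dvd 4 * int a * M * d1 \<and> int p ^ t dvd 4 * int a * M * d2
           \<and> int p ^ t dvd 4 * int a * M * d3")
      case True
      then show ?thesis unfolding S_eval p3 using pnz by (simp add: q_def)
    next
      case False
      then show ?thesis unfolding S_eval by (auto simp: q_def)
    qed
  qed (simp add: q_def)
  finally show ?thesis .
qed

theorem lemma3p4:
  fixes m n d1 d2 d3 :: int and p :: nat
  assumes "m \<ge> 3" and "odd m" and "n \<ge> 0"
    and "d1 > 0" and "d2 > 0" and "d3 > 0"
    and "prime p" and "odd p" and "int p dvd (m - 2)"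
  shows "has_local_density p m d1 d2 d3 (8 * (m - 2) * n + 3 * (m - 4)^2)
     (if int p ^ multiplicity (int p) (gcd d1 (gcd d2 d3)) dvd n
      then of_nat p ^ (multiplicity (int p) (m - 2)
             + min (multiplicity (int p) d1) (min (multiplicity (int p) d2) (multiplicity (int p) d3)))
      else 0)"
proof -
  define M where "M = m - 2"
  define P where "P = int p"
  have prI: "prime P" unfolding P_def using assms(7) by simp
  define mu where "mu = multiplicity P M"
  have Mnz: "M \<noteq> 0" unfolding M_def using assms(1) by simp
  have dnz: "d1 \<noteq> 0" "d2 \<noteq> 0" "d3 \<noteq> 0" using assms(4,5,6) by simp_all
  have Pnu: "\<not> is_unit P" using prI not_prime_unit by blast
  define k1 where "k1 = multiplicity P d1"
  define k2 where "k2 = multiplicity P d2"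
  define k3 where "k3 = multiplicity P d3"
  define k where "k = min k1 (min k2 k3)"
  obtain M' where M': "M = P ^ mu * M'" "\<not> P dvd M'"
    unfolding mu_def by (rule multiplicity_decompose'[OF Mnz Pnu])
  obtain e1 where e1: "d1 = P ^ k1 * e1" "\<not> P dvd e1"
    unfolding k1_def by (rule multiplicity_decompose'[OF dnz(1) Pnu])
  obtain e2 where e2: "d2 = P ^ k2 * e2" "\<not> P dvd e2"
    unfolding k2_def by (rule multiplicity_decompose'[OF dnz(2) Pnu])
  obtain e3 where e3: "d3 = P ^ k3 * e3" "\<not> P dvd e3"
    unfolding k3_def by (rule multiplicity_decompose'[OF dnz(3) Pnu])
  have g: "multiplicity P (gcd d1 (gcd d2 d3)) = k"
    unfolding k_def k1_def k2_def k3_def using assms(4,5,6) prI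
    by (simp add: multiplicity_gcd)
  have ev: "\<forall>\<^sub>F t in sequentially.
      local_density_trunc p m d1 d2 d3 (8 * (m - 2) * n + 3 * (m - 4)^2) t
      = (if P ^ k dvd n then of_nat p ^ (mu + k) else 0)"
    unfolding eventually_sequentially
  proof (intro exI allI impI)
    fix t assume t: "t \<ge> mu + k"
    show "local_density_trunc p m d1 d2 d3 (8 * (m - 2) * n + 3 * (m - 4)^2) t
      = (if P ^ k dvd n then of_nat p ^ (mu + k) else 0)"
    proof -
      have m2: "m \<noteq> 2" using assms(1) by simp
      have "local_density_trunc p m d1 d2 d3 (8 * (m - 2) * n + 3 * (m - 4)^2) t
        = (\<Sum>a\<in>{0..<p^t}. if (int p ^ t dvd 4 * int a * M * d1 \<and> int p ^ t dvd 4 * int a * M * d2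
           \<and> int p ^ t dvd 4 * int a * M * d3) then W (p^t) (int a * (8 * M * n)) else 0)"
        by (rule trunc_eval[OF assms(7,8) M_def assms(9)[folded M_def] m2])
      also have "\<dots> = (if int p ^ k dvd n then of_nat p ^ (mu + k) else 0)"
        by (rule final_sum[OF assms(7,8) M'[unfolded P_def] e1[unfolded P_def] e2[unfolded P_def]
          e3[unfolded P_def] k_def t])
      finally show ?thesis unfolding P_def .
    qed
  qed
  show ?thesis unfolding has_local_density_def
    using tendsto_eventually[OF ev] g unfolding mu_def M_def P_def k_def k1_def k2_def k3_def
    by simp
qed


end
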